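(* Let $\mathbb{X}$ be a two-dimensional real Banach space. Suppose that every $T\in\mathbb{L}(\mathbb{X})$ with $\|T\|=1$ which attains its norm at (at least) two linearly independent vectors is an extreme contraction. Then $\mathbb{X}$ is strictly convex.
   Context: $T$ attains its norm at $u$ if $\|u\|=1$ and $\|Tu\|=\|T\|$. An extreme contraction is a norm one operator that is an extreme point of the closed unit ball of $\mathbb{L}(\mathbb{X})$. *)

theory Defs
  imports "HOL-Analysis.Analysis"
begin

definition strictly_convex_space :: "'a::real_normed_vector itself \<Rightarrow> bool" where
  "strictly_convex_space _ \<longleftrightarrow>
     (\<forall>x y::'a. norm x = 1 \<and> norm y = 1 \<and> x \<noteq> y \<longrightarrow>
        (\<forall>t::real. 0 < t \<and> t < 1 \<longrightarrow> norm ((1 - t) *\<^sub>R x + t *\<^sub>R y) < 1))"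

definition attains_norm_at :: "('a::real_normed_vector \<Rightarrow>\<^sub>L 'a) \<Rightarrow> 'a \<Rightarrow> bool" where
  "attains_norm_at T u \<longleftrightarrow> norm u = 1 \<and> norm (blinfun_apply T u) = norm T"

definition extreme_contraction :: "('a::real_normed_vector \<Rightarrow>\<^sub>L 'a) \<Rightarrow> bool" where
  "extreme_contraction T \<longleftrightarrow> norm T = 1 \<and> T extreme_point_of (cball 0 1)"

end

theory Submission
  imports Defs
begin

lemma key_bound:
  fixes x y w :: "'a::real_normed_vector" and t a b :: real
  assumes nx: "norm x = 1" and ny: "norm y = 1"
    and t: "0 < t" "t < 1"
    and nz: "norm ((1 - t) *\<^sub>R x + t *\<^sub>R y) = 1"
    and w: "w = a *\<^sub>R x + b *\<^sub>R y" and nw: "norm w \<le> 1"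
  shows "a + b \<le> 1"
proof (rule ccontr)
  assume "\<not> a + b \<le> 1"
  hence s: "a + b > 1" by simp
  define z where "z = (1 - t) *\<^sub>R x + t *\<^sub>R y"
  define g where "g = min (1/2) (min ((1 - t) / (\<bar>a\<bar> + 1)) (t / (\<bar>b\<bar> + 1)))"
  have g0: "g > 0" using t by (simp add: g_def)
  have g1: "g \<le> (1 - t) / (\<bar>a\<bar> + 1)" "g \<le> t / (\<bar>b\<bar> + 1)" by (auto simp: g_def)
  have ga: "g * \<bar>a\<bar> \<le> 1 - t"
  proof -
    have "g * (\<bar>a\<bar> + 1) \<le> 1 - t" using g1(1) by (simp add: pos_le_divide_eq mult.commute)
    thus ?thesis using g0 by (simp add: algebra_simps)
  qed
  have gb: "g * \<bar>b\<bar> \<le> t"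
  proof -
    have "g * (\<bar>b\<bar> + 1) \<le> t" using g1(2) by (simp add: pos_le_divide_eq mult.commute)
    thus ?thesis using g0 by (simp add: algebra_simps)
  qed
  define c where "c = 1 + g * (a + b - 1)"
  define al where "al = c * (1 - t) - g * a"
  define be where "be = c * t - g * b"
  have c1: "c > 1" using g0 s by (simp add: c_def)
  have "g * a \<le> g * \<bar>a\<bar>" using g0 by (intro mult_left_mono) auto
  moreover have "c * (1 - t) \<ge> 1 - t" using c1 t by simp
  ultimately have al0: "al \<ge> 0" using ga by (simp add: al_def)
  have "g * b \<le> g * \<bar>b\<bar>" using g0 by (intro mult_left_mono) auto
  moreover have "c * t \<ge> t" using c1 t by simp
  ultimately have be0: "be \<ge> 0" using gb by (simp add: be_def)
  have eq: "c *\<^sub>R z = al *\<^sub>R x + be *\<^sub>R y + g *\<^sub>R w"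
    by (simp add: z_def al_def be_def w algebra_simps)
  have "norm (al *\<^sub>R x + be *\<^sub>R y + g *\<^sub>R w) \<le> norm (al *\<^sub>R x) + norm (be *\<^sub>R y) + norm (g *\<^sub>R w)"
    by (meson norm_triangle_le order_refl add_mono)
  also have "\<dots> = al + be + g * norm w" using al0 be0 g0 nx ny by simp
  also have "\<dots> \<le> al + be + g" using g0 nw by (simp add: mult_left_le)
  also have "\<dots> = 1" by (simp add: al_def be_def c_def algebra_simps)
  finally have "norm (c *\<^sub>R z) \<le> 1" using eq by simp
  moreover have "norm (c *\<^sub>R z) = c" using c1 nz by (simp add: z_def)
  ultimately show False using c1 by simp
qed

theorem mainTheorem18:
  assumes dim2: "dim (UNIV :: 'a::banach set) = 2"
    and hyp: "\<forall>T :: 'a \<Rightarrow>\<^sub>L 'a. norm T = 1 \<and>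
               (\<exists>u v. attains_norm_at T u \<and> attains_norm_at T v \<and> u \<noteq> v \<and> independent {u, v})
               \<longrightarrow> extreme_contraction T"
  shows "strictly_convex_space TYPE('a)"
proof (rule ccontr)
  assume "\<not> strictly_convex_space TYPE('a)"
  then obtain x y :: 'a and t :: real where nx: "norm x = 1" and ny: "norm y = 1" and xy: "x \<noteq> y"
    and t: "0 < t" "t < 1" and nz1: "\<not> norm ((1 - t) *\<^sub>R x + t *\<^sub>R y) < 1"
    unfolding strictly_convex_space_def by blast
  define z where "z = (1 - t) *\<^sub>R x + t *\<^sub>R y"
  have "norm z \<le> norm ((1 - t) *\<^sub>R x) + norm (t *\<^sub>R y)" unfolding z_def by (rule norm_triangle_ineq)
  also have "\<dots> = 1" using nx ny t by simp
  finally have nz: "norm z = 1" using nz1 z_def by simp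
  have y0: "y \<noteq> 0" using ny by auto
  have ind: "independent {x, y}"
  proof -
    have "x \<notin> span {y}"
    proof
      assume "x \<in> span {y}"
      then obtain k where k: "x = k *\<^sub>R y" by (auto simp: real_vector.span_singleton)
      hence "\<bar>k\<bar> = 1" using nx ny by simp
      hence "k = 1 \<or> k = -1" by auto
      thus False
      proof
        assume "k = 1" thus False using k xy by simp
      next
        assume "k = -1"
        hence "z = (2 * t - 1) *\<^sub>R y" using k by (simp add: z_def algebra_simps flip: scaleR_2)
        hence "norm z = \<bar>2 * t - 1\<bar>" using ny by simp
        thus False using nz t by simp
      qed
    qed
    moreover have "independent {y}" using y0
      by (simp add: real_vector.independent_insert)
    ultimately show ?thesis using xy by (simp add: real_vector.independent_insert)
  qed
  define E where "E = real_vector.extend_basis {x, y}"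
  have spE: "span E = UNIV" using ind by (simp add: E_def real_vector.span_extend_basis)
  have indE: "independent E" using ind by (simp add: E_def real_vector.independent_extend_basis)
  have subE: "{x, y} \<subseteq> E" unfolding E_def by (rule real_vector.extend_basis_superset[OF ind])
  have "card E = dim (UNIV :: 'a set)"
    using real_vector.basis_card_eq_dim[of E UNIV] spE indE by simp
  hence cE: "card E = 2" using dim2 by simp
  hence fE: "finite E" using card.infinite by fastforce
  have "card {x, y} = 2" using xy by simp
  hence "{x, y} = E" using card_subset_eq[OF fE subE] cE by argo
  hence sp: "span {x, y} = UNIV" using spE by simp
  have coords: "\<exists>a b. u = a *\<^sub>R x + b *\<^sub>R y" for u
  proof -
    have "u \<in> span (insert x {y})" using sp by simp
    then obtain a where "u - a *\<^sub>R x \<in> span {y}" by (auto simp: real_vector.span_breakdown_eq)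
    then obtain b where "u - a *\<^sub>R x = b *\<^sub>R y" by (auto simp: real_vector.span_singleton)
    hence "u = a *\<^sub>R x + b *\<^sub>R y" by (simp add: algebra_simps)
    thus ?thesis by blast
  qed
  obtain f :: "'a \<Rightarrow> real" where lf: "linear f" and fxy: "\<forall>v\<in>{x, y}. f v = (\<lambda>_. 1) v"
    using real_vector.linear_independent_extend[OF ind, of "\<lambda>_. 1 :: real"] by (elim exE conjE)
  have fx: "f x = 1" and fy: "f y = 1" using fxy by auto
  have fab: "f (a *\<^sub>R x + b *\<^sub>R y) = a + b" for a b
    using lf fx fy by (simp add: linear_add linear_scale)
  have fle1: "f w \<le> 1" if "norm w \<le> 1" for w
  proof -
    obtain a b where w: "w = a *\<^sub>R x + b *\<^sub>R y" using coords by blast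
    have "a + b \<le> 1"
      by (rule key_bound[OF nx ny t _ w that]) (use nz z_def in simp)
    thus ?thesis using w fab by simp
  qed
  have fbound: "\<bar>f u\<bar> \<le> norm u" for u
  proof (cases "u = 0")
    case True thus ?thesis using lf by (simp add: linear_0)
  next
    case False
    hence n0: "norm u > 0" by simp
    define w where "w = (1 / norm u) *\<^sub>R u"
    have nw: "norm w = 1" using n0 by (simp add: w_def)
    have fw: "f w = f u / norm u" using lf by (simp add: w_def linear_scale)
    have "f w \<le> 1" using fle1 nw by simp
    moreover have "f (- w) \<le> 1" using fle1 nw by simp
    moreover have "f (- w) = - f w" using lf by (simp add: linear_neg)
    ultimately have "\<bar>f w\<bar> \<le> 1" by simp
    thus ?thesis using fw n0 by (simp add: abs_div divide_le_eq)
  qed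
  have bl: "bounded_linear (\<lambda>u. f u *\<^sub>R v)" for v
  proof (rule bounded_linear_intro[where K="norm v"])
    show "f (a + b) *\<^sub>R v = f a *\<^sub>R v + f b *\<^sub>R v" for a b
      by (simp add: linear_add[OF lf] scaleR_add_left)
    show "f (r *\<^sub>R a) *\<^sub>R v = r *\<^sub>R (f a *\<^sub>R v)" for r a
      by (simp add: linear_scale[OF lf])
    fix u
    have "norm (f u *\<^sub>R v) = \<bar>f u\<bar> * norm v" by simp
    also have "\<dots> \<le> norm u * norm v" by (rule mult_right_mono[OF fbound norm_ge_zero])
    finally show "norm (f u *\<^sub>R v) \<le> norm u * norm v" .
  qed
  define Op :: "'a \<Rightarrow> 'a \<Rightarrow>\<^sub>L 'a" where "Op v = Blinfun (\<lambda>u. f u *\<^sub>R v)" for v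
  have Op_ap: "blinfun_apply (Op v) u = f u *\<^sub>R v" for u v
    by (simp add: Op_def bounded_linear_Blinfun_apply[OF bl])
  have Op_le: "norm (Op v) \<le> norm v" for v
  proof (rule norm_blinfun_bound)
    show "0 \<le> norm v" by simp
    fix u
    have "norm (blinfun_apply (Op v) u) = \<bar>f u\<bar> * norm v" by (simp add: Op_ap)
    also have "\<dots> \<le> norm u * norm v" by (rule mult_right_mono[OF fbound norm_ge_zero])
    also have "\<dots> = norm v * norm u" by (rule mult.commute)
    finally show "norm (blinfun_apply (Op v) u) \<le> norm v * norm u" .
  qed
  define T where "T = Op z"
  have Tx: "blinfun_apply T x = z" and Ty: "blinfun_apply T y = z"
    by (simp_all add: T_def Op_ap fx fy)
  have nT: "norm T = 1"
  proof (rule antisym)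
    show "norm T \<le> 1" using Op_le[of z] nz by (simp add: T_def)
    have "norm (blinfun_apply T x) \<le> norm T * norm x" by (rule norm_blinfun)
    thus "1 \<le> norm T" using Tx nz nx by simp
  qed
  have att: "attains_norm_at T x" "attains_norm_at T y"
    using nT Tx Ty nz nx ny by (auto simp: attains_norm_at_def)
  have "extreme_contraction T" using hyp nT att xy ind by blast
  hence ext: "T extreme_point_of cball 0 1" by (simp add: extreme_contraction_def)
  have A: "Op x \<in> cball 0 1" and B: "Op y \<in> cball 0 1"
    using Op_le[of x] Op_le[of y] nx ny by auto
  have AB: "Op x \<noteq> Op y"
  proof
    assume "Op x = Op y"
    hence "blinfun_apply (Op x) x = blinfun_apply (Op y) x" by simp
    thus False using xy fx by (simp add: Op_ap)
  qed
  have "T = (1 - t) *\<^sub>R Op x + t *\<^sub>R Op y"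
    by (rule blinfun_eqI) (simp add: T_def Op_ap z_def blinfun.add_left blinfun.diff_left blinfun.scaleR_left algebra_simps)
  hence "T \<in> open_segment (Op x) (Op y)" using AB t by (auto simp: in_segment)
  thus False using ext A B by (auto simp: extreme_point_of_def)
qed

end
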